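(* Let $d>0$, $K_z>0$, $K_x>0$, $k>0$, $\sigma>0$, $l>0$, $\rho\ge0$, let $S:\mathbb{R}\to\mathbb{R}$ be a smooth odd saturating function with $S(0)=0$, $S'(0)=1$, let $\eta(z)=\exp(-z^2/(2\sigma^2))$, and consider the scalar equilibrium bifurcation problem $$g(z,d,u,b,K_x,K_z,k,\sigma,\rho,l) := (1-\eta(z))\,K_x\!\left(\frac{\rho}{l}\tanh(kz) - z - \frac{dz-uS(z)+b}{K_z\eta(z)}\right) - \frac{dz-uS(z)+b}{K_z} = 0$$ with $b$ as bifurcation parameter, $u>d$ close to $d$, and its two saddle-node bifurcation points $(z_1^*,b_1^* )$ with $z_1^*>0>b_1^*$ and $(z_2^*,b_2^* )$ with $z_2^*<0<b_2^*$. Then varying $u$ changes the size of the bistable region (the interval $(b_1^*,b_2^* )$ of $b$ values) by moving these saddle points: $\partial b_1^*/\partial u<0$ and $\partial b_2^*/\partial u>0$, so larger $u$ gives a larger bistable region (a larger input $|b|$ is required for switching) and smaller $u$ gives a smaller bistable region (a smaller input is required for switching).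
   Context: Zeros of $g$ correspond to equilibria of the opinion–position system $\dot z=-dz+uS(z)+b-K_z\eta(z)(z-x)$, $\dot x=(1-\eta(z))K_x(\frac{\rho}{l}\tanh(kz)-x)-\eta(z)(x-z)$, where $z$ is an agent's opinion between two tasks, $x$ its position, $u$ an attention gain and $b$ a bias; "switching" means the opinion changing sign when $b$ crosses a saddle-node value. *)

theory Defs
  imports "HOL-Analysis.Analysis"
begin

definition eta :: "real \<Rightarrow> real \<Rightarrow> real" where
  "eta \<sigma> z = exp (- (z\<^sup>2) / (2 * \<sigma>\<^sup>2))"

text \<open>The scalar equilibrium function g(z,d,u,b,K_x,K_z,k,sigma,rho,l), obtained by
  eliminating x from the equilibrium equations of the opinion-position system.\<close>
definition gfun :: "(real \<Rightarrow> real) \<Rightarrow> real \<Rightarrow> real \<Rightarrow> real \<Rightarrow> real \<Rightarrow> real \<Rightarrow> real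
    \<Rightarrow> real \<Rightarrow> real \<Rightarrow> real \<Rightarrow> real \<Rightarrow> real" where
  "gfun S z d u b Kx Kz k \<sigma> \<rho> l =
     (1 - eta \<sigma> z) * Kx * (\<rho> / l * tanh (k * z) - z - (d * z - u * S z - b) / (Kz * eta \<sigma> z))
     - (d * z - u * S z - b) / Kz"

definition smooth_fun :: "(real \<Rightarrow> real) \<Rightarrow> bool" where
  "smooth_fun S \<longleftrightarrow> (\<forall>n x. ((deriv ^^ n) S) differentiable (at x))"

definition saturating :: "(real \<Rightarrow> real) \<Rightarrow> bool" where
  "saturating S \<longleftrightarrow> bounded (range S) \<and> (\<forall>x. deriv S x > 0)"

definition saddle_node :: "(real \<Rightarrow> real) \<Rightarrow> real \<Rightarrow> real \<Rightarrow> real \<Rightarrow> real \<Rightarrow> real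
    \<Rightarrow> real \<Rightarrow> real \<Rightarrow> real \<Rightarrow> real \<Rightarrow> real \<Rightarrow> bool" where
  "saddle_node S d u Kx Kz k \<sigma> \<rho> l z b \<longleftrightarrow>
     gfun S z d u b Kx Kz k \<sigma> \<rho> l = 0
   \<and> deriv (\<lambda>w. gfun S w d u b Kx Kz k \<sigma> \<rho> l) z = 0
   \<and> deriv (deriv (\<lambda>w. gfun S w d u b Kx Kz k \<sigma> \<rho> l)) z \<noteq> 0
   \<and> deriv (\<lambda>c. gfun S z d u c Kx Kz k \<sigma> \<rho> l) b \<noteq> 0"

end

theory Submission
  imports Defs
begin

lemma key:
  fixes S :: "real \<Rightarrow> real" and z1 b1 :: "real \<Rightarrow> real"
  assumes Kz: "Kz > 0" and Kx: "Kx > 0" and sg: "\<sigma> > 0"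
    and Sd: "\<And>x. S differentiable (at x)"
    and U: "open U" "u0 \<in> U"
    and H: "\<forall>u\<in>U. z1 differentiable (at u) \<and> saddle_node S d u Kx Kz k \<sigma> \<rho> l (z1 u) (b1 u)"
  shows "deriv b1 u0 = - S (z1 u0)"
proof -
  define C where "C w = (1 - eta \<sigma> w) * Kx / (Kz * eta \<sigma> w) + 1/Kz" for w
  define A where "A w = (1 - eta \<sigma> w)*Kx*(\<rho>/l * tanh(k*w) - w)" for w
  define P where "P w = A w / C w" for w
  have etapos: "eta \<sigma> w > 0" for w by (simp add: eta_def)
  have etale: "eta \<sigma> w \<le> 1" for w by (simp add: eta_def)
  have Cpos: "C w > 0" for w
  proof -
    have "(1 - eta \<sigma> w) * Kx / (Kz * eta \<sigma> w) \<ge> 0"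
      using etapos[of w] etale[of w] Kx Kz by (intro divide_nonneg_pos mult_nonneg_nonneg) auto
    moreover have "1/Kz > 0" using Kz by simp
    ultimately show ?thesis unfolding C_def by linarith
  qed
  have geq: "gfun S w d u b Kx Kz k \<sigma> \<rho> l = C w * (P w - (d*w - u*S w - b))" for w u b
  proof -
    have "gfun S w d u b Kx Kz k \<sigma> \<rho> l = A w - (d*w - u*S w - b) * C w"
      unfolding gfun_def C_def A_def by (simp add: algebra_simps add_divide_distrib diff_divide_distrib)
    also have "\<dots> = C w * (P w - (d*w - u*S w - b))"
      using Cpos[of w] unfolding P_def by (simp add: algebra_simps)
    finally show ?thesis .
  qed
  have Cd: "\<exists>D. (C has_real_derivative D) (at w)" for w
    unfolding C_def[abs_def] eta_def
    using etapos[of w] Kz sg unfolding eta_def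
    by (intro exI) (rule derivative_eq_intros refl | simp)+
  have Ad: "\<exists>D. (A has_real_derivative D) (at w)" for w
    unfolding A_def[abs_def] eta_def using sg
    by (intro exI) (rule derivative_eq_intros refl | simp)+
  have Cdiff: "C differentiable (at w)" for w using Cd[of w] real_differentiable_def by blast
  have Adiff: "A differentiable (at w)" for w using Ad[of w] real_differentiable_def by blast
  have PD: "(P has_real_derivative deriv P w) (at w)" for w
  proof -
    have "P differentiable (at w)" unfolding P_def[abs_def]
      using Cdiff Adiff Cpos[of w] by (intro differentiable_divide) (auto simp: less_imp_neq[symmetric])
    then show ?thesis using DERIV_deriv_iff_real_differentiable by blast
  qed
  have CD: "(C has_real_derivative deriv C w) (at w)" for w
    using Cdiff DERIV_deriv_iff_real_differentiable by blast
  have SD: "(S has_real_derivative deriv S w) (at w)" for w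
    using Sd DERIV_deriv_iff_real_differentiable by blast
  have loc: "b1 u = d * z1 u - u * S (z1 u) - P (z1 u) \<and> deriv P (z1 u) - d + u * deriv S (z1 u) = 0"
    if "u \<in> U" for u
  proof -
    let ?z = "z1 u" and ?b = "b1 u"
    have sn: "saddle_node S d u Kx Kz k \<sigma> \<rho> l ?z ?b" using H that by blast
    have Q0: "P ?z - (d*?z - u*S ?z - ?b) = 0"
      using sn Cpos[of ?z] unfolding saddle_node_def geq by simp
    have fe: "(\<lambda>w. gfun S w d u ?b Kx Kz k \<sigma> \<rho> l) = (\<lambda>w. C w * (P w - (d*w - u*S w - ?b)))"
      using geq by auto
    have "((\<lambda>w. C w * (P w - (d*w - u*S w - ?b))) has_real_derivative
           deriv C ?z * (P ?z - (d*?z - u*S ?z - ?b)) + C ?z * (deriv P ?z - (d - u * deriv S ?z))) (at ?z)"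
      by (rule derivative_eq_intros CD PD SD refl | simp)+
    then have "deriv (\<lambda>w. gfun S w d u ?b Kx Kz k \<sigma> \<rho> l) ?z = C ?z * (deriv P ?z - (d - u * deriv S ?z))"
      unfolding fe using Q0 by (simp add: DERIV_imp_deriv)
    then have "C ?z * (deriv P ?z - (d - u * deriv S ?z)) = 0" using sn unfolding saddle_node_def by simp
    then have "deriv P ?z - d + u * deriv S ?z = 0" using Cpos[of ?z] by simp
    then show ?thesis using Q0 by simp
  qed
  obtain Z where ZD: "(z1 has_real_derivative Z) (at u0)"
    using H U real_differentiable_def by blast
  have "((\<lambda>u. d * z1 u - u * S (z1 u) - P (z1 u)) has_real_derivative
         d * Z - (S (z1 u0) + u0 * (deriv S (z1 u0) * Z)) - deriv P (z1 u0) * Z) (at u0)"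
    by (rule derivative_eq_intros DERIV_chain2[OF SD ZD] DERIV_chain2[OF PD ZD] ZD refl | simp)+
  also have "d * Z - (S (z1 u0) + u0 * (deriv S (z1 u0) * Z)) - deriv P (z1 u0) * Z = - S (z1 u0)"
  proof -
    have "deriv P (z1 u0) - d + u0 * deriv S (z1 u0) = 0" using loc U by blast
    then have "d = deriv P (z1 u0) + u0 * deriv S (z1 u0)" by simp
    then show ?thesis by (simp add: algebra_simps)

  qed
  finally have "(b1 has_real_derivative - S (z1 u0)) (at u0)"
    by (rule has_field_derivative_transform_within_open[OF _ U]) (use loc in auto)
  then show ?thesis by (rule DERIV_imp_deriv)
qed

theorem theorem2:
  fixes d Kz Kx k \<sigma> l \<rho> :: real and S :: "real \<Rightarrow> real"
  assumes "d > 0" "Kz > 0" "Kx > 0" "k > 0" "\<sigma> > 0" "l > 0" "\<rho> \<ge> 0"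
    and "smooth_fun S" and "saturating S"
    and "\<And>x. S (- x) = - S x" and "S 0 = 0" and "deriv S 0 = 1"
  shows "\<exists>\<epsilon>>0.
    (\<forall>u0 U z1 b1. d < u0 \<and> u0 < d + \<epsilon> \<and> open U \<and> u0 \<in> U \<and>
        (\<forall>u\<in>U. z1 differentiable (at u) \<and> b1 differentiable (at u) \<and>
                 saddle_node S d u Kx Kz k \<sigma> \<rho> l (z1 u) (b1 u) \<and> z1 u > 0 \<and> b1 u < 0)
        \<longrightarrow> deriv b1 u0 < 0)
  \<and> (\<forall>u0 U z2 b2. d < u0 \<and> u0 < d + \<epsilon> \<and> open U \<and> u0 \<in> U \<and>
        (\<forall>u\<in>U. z2 differentiable (at u) \<and> b2 differentiable (at u) \<and>
                 saddle_node S d u Kx Kz k \<sigma> \<rho> l (z2 u) (b2 u) \<and> z2 u < 0 \<and> b2 u > 0)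
        \<longrightarrow> deriv b2 u0 > 0)"
proof -
  have Sd: "S differentiable (at x)" for x
    using assms(8) unfolding smooth_fun_def by (metis funpow_0)
  have SD: "(S has_real_derivative deriv S x) (at x)" for x
    using Sd DERIV_deriv_iff_real_differentiable by blast
  have Sinc: "a < b \<Longrightarrow> S a < S b" for a b
    by (rule DERIV_pos_imp_increasing) (use SD assms(9) in \<open>auto simp: saturating_def\<close>)
  show ?thesis
  proof (intro exI[of _ 1] conjI allI impI)
    fix u0 U z1 b1
    assume h: "d < u0 \<and> u0 < d + 1 \<and> open U \<and> u0 \<in> U \<and>
        (\<forall>u\<in>U. z1 differentiable (at u) \<and> b1 differentiable (at u) \<and>
                 saddle_node S d u Kx Kz k \<sigma> \<rho> l (z1 u) (b1 u) \<and> z1 u > 0 \<and> b1 u < 0)"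
    have "deriv b1 u0 = - S (z1 u0)"
      by (rule key[OF assms(2,3,5) Sd]) (use h in auto)
    moreover have "S (z1 u0) > 0" using Sinc[of 0 "z1 u0"] h assms(11) by auto
    ultimately show "deriv b1 u0 < 0" by simp
  next
    fix u0 U z2 b2
    assume h: "d < u0 \<and> u0 < d + 1 \<and> open U \<and> u0 \<in> U \<and>
        (\<forall>u\<in>U. z2 differentiable (at u) \<and> b2 differentiable (at u) \<and>
                 saddle_node S d u Kx Kz k \<sigma> \<rho> l (z2 u) (b2 u) \<and> z2 u < 0 \<and> b2 u > 0)"
    have "deriv b2 u0 = - S (z2 u0)"
      by (rule key[OF assms(2,3,5) Sd]) (use h in auto)
    moreover have "S (z2 u0) < 0" using Sinc[of "z2 u0" 0] h assms(11) by auto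
    ultimately show "deriv b2 u0 > 0" by simp
  qed simp
qed

end
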